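(* Let $U$ be a nonempty finite set, $R\subseteq U\times U$ serial and transitive, and $r$ the rank function of $M(Reg(U,R))$. Let $n$ be an integer with $1\le n\le h(U)$, and let $X,Y\in Reg(U,R)$ with $h(X)=n$ and $h(Y)=n-1$. Then for every $Z\subseteq U$ with $Y\subsetneq Z\subsetneq X$, $r(Z)=h(X)$.
   Context: $R_s(x)=\{y\in U\mid xRy\}$; $\underline{R}(X)=\{x\mid R_s(x)\subseteq X\}$, $\overline{R}(X)=\{x\mid R_s(x)\cap X\neq\emptyset\}$; $X$ is regular if $X=\underline{R}(\overline{R}(X))$, and $Reg(U,R)$ is the lattice of regular sets under inclusion, with least element $\emptyset$. $h(A)$ is the length of a maximal chain in $[\emptyset,A]$. $M(Reg(U,R))$ is the matroid on $U$ with independent sets $\{X\subseteq U\mid h(Y)\ge|X\cap Y|\ \forall Y\in Reg(U,R)\}$ and rank function $r(X)=\max\{|I|\mid I\subseteq X \text{ independent}\}$. *)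

theory Defs
  imports Main
begin

definition succ_set :: "('a \<times> 'a) set \<Rightarrow> 'a \<Rightarrow> 'a set" where
  "succ_set R x = {y. (x, y) \<in> R}"

definition lower_approx :: "'a set \<Rightarrow> ('a \<times> 'a) set \<Rightarrow> 'a set \<Rightarrow> 'a set" where
  "lower_approx U R X = {x \<in> U. succ_set R x \<subseteq> X}"

definition upper_approx :: "'a set \<Rightarrow> ('a \<times> 'a) set \<Rightarrow> 'a set \<Rightarrow> 'a set" where
  "upper_approx U R X = {x \<in> U. succ_set R x \<inter> X \<noteq> {}}"

definition serial_on :: "'a set \<Rightarrow> ('a \<times> 'a) set \<Rightarrow> bool" where
  "serial_on U R \<longleftrightarrow> (\<forall>x\<in>U. \<exists>y\<in>U. (x, y) \<in> R)"

definition Reg :: "'a set \<Rightarrow> ('a \<times> 'a) set \<Rightarrow> 'a set set" where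
  "Reg U R = {X. X \<subseteq> U \<and> X = lower_approx U R (upper_approx U R X)}"

definition reg_chain_in :: "'a set \<Rightarrow> ('a \<times> 'a) set \<Rightarrow> 'a set \<Rightarrow> 'a set set \<Rightarrow> bool" where
  "reg_chain_in U R A C \<longleftrightarrow> C \<subseteq> Reg U R \<and> (\<forall>B\<in>C. B \<subseteq> A) \<and>
     (\<forall>B1\<in>C. \<forall>B2\<in>C. B1 \<subseteq> B2 \<or> B2 \<subseteq> B1)"

definition reg_maximal_chain :: "'a set \<Rightarrow> ('a \<times> 'a) set \<Rightarrow> 'a set \<Rightarrow> 'a set set \<Rightarrow> bool" where
  "reg_maximal_chain U R A C \<longleftrightarrow> reg_chain_in U R A C \<and>
     (\<forall>D. reg_chain_in U R A D \<and> C \<subseteq> D \<longrightarrow> D = C)"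

text \<open>h(A): length (number of elements minus one) of a maximal chain in [{}, A];
  we take the greatest such length (a longest chain is always maximal).\<close>
definition height :: "'a set \<Rightarrow> ('a \<times> 'a) set \<Rightarrow> 'a set \<Rightarrow> nat" where
  "height U R A = Max {card C - 1 | C. reg_maximal_chain U R A C}"

definition reg_indep :: "'a set \<Rightarrow> ('a \<times> 'a) set \<Rightarrow> 'a set \<Rightarrow> bool" where
  "reg_indep U R X \<longleftrightarrow> X \<subseteq> U \<and> (\<forall>Y\<in>Reg U R. card (X \<inter> Y) \<le> height U R Y)"

definition reg_rank :: "'a set \<Rightarrow> ('a \<times> 'a) set \<Rightarrow> 'a set \<Rightarrow> nat" where
  "reg_rank U R X = Max {card I | I. I \<subseteq> X \<and> reg_indep U R I}"

end

theory Submission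
  imports Defs
begin

definition term_el :: "'a set \<Rightarrow> ('a \<times> 'a) set \<Rightarrow> 'a \<Rightarrow> bool" where
  "term_el U R t \<longleftrightarrow> t \<in> U \<and> (\<forall>y. (t,y) \<in> R \<longrightarrow> (y,t) \<in> R)"

definition cls :: "'a set \<Rightarrow> ('a \<times> 'a) set \<Rightarrow> 'a set \<Rightarrow> 'a set set" where
  "cls U R W = {succ_set R t | t. term_el U R t \<and> t \<in> W}"

definition GS :: "'a set \<Rightarrow> ('a \<times> 'a) set \<Rightarrow> 'a set set \<Rightarrow> 'a set" where
  "GS U R S = {x\<in>U. \<forall>t. term_el U R t \<and> (x,t) \<in> R \<longrightarrow> succ_set R t \<in> S}"

context
  fixes U :: "'a set" and R :: "('a \<times> 'a) set"
  assumes fin: "finite U" and RU: "R \<subseteq> U \<times> U" and ser: "serial_on U R" and tr: "trans R"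
begin

lemma succ_sub: "succ_set R x \<subseteq> U"
  using RU by (auto simp: succ_set_def)

lemma F1: "term_el U R t \<Longrightarrow> (t,t) \<in> R"
  using ser tr unfolding term_el_def serial_on_def by (meson transD)

lemma F2: "term_el U R t \<Longrightarrow> (t,u) \<in> R \<Longrightarrow> term_el U R u \<and> succ_set R u = succ_set R t"
  using RU tr unfolding term_el_def succ_set_def by (auto dest: transD)

lemma F3: assumes "x \<in> U" shows "\<exists>t. term_el U R t \<and> (x,t) \<in> R"
proof -
  obtain y0 where "(x,y0) \<in> R" using ser assms unfolding serial_on_def by blast
  then obtain y where y: "(x,y) \<in> R" and ymin: "\<And>z. (x,z) \<in> R \<Longrightarrow> card (succ_set R y) \<le> card (succ_set R z)"
    using ex_has_least_nat[of "\<lambda>y. (x,y) \<in> R" y0 "\<lambda>y. card (succ_set R y)"] by blast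
  have yU: "y \<in> U" using y RU by auto
  obtain t where t: "(y,t) \<in> R" using ser yU unfolding serial_on_def by blast
  have xt: "(x,t) \<in> R" using y t tr by (meson transD)
  have sub: "\<And>u. (y,u) \<in> R \<Longrightarrow> succ_set R u \<subseteq> succ_set R y"
    using tr unfolding succ_set_def by (auto dest: transD)
  have eq: "\<And>u. (y,u) \<in> R \<Longrightarrow> succ_set R u = succ_set R y"
  proof -
    fix u assume yu: "(y,u) \<in> R"
    have "(x,u) \<in> R" using y yu tr by (meson transD)
    then show "succ_set R u = succ_set R y"
      using card_seteq[OF finite_subset[OF succ_sub fin] sub[OF yu]] ymin by blast
  qed
  have tt: "(t,t) \<in> R" using eq[OF t] t unfolding succ_set_def by blast
  have "term_el U R t"
    unfolding term_el_def
  proof (intro conjI allI impI)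
    show "t \<in> U" using t RU by auto
    fix u assume tu: "(t,u) \<in> R"
    have "(y,u) \<in> R" using t tu tr by (meson transD)
    then have "succ_set R u = succ_set R y" by (rule eq)
    with eq[OF t] have "succ_set R u = succ_set R t" by simp
    with tt show "(u,t) \<in> R" unfolding succ_set_def by blast
  qed
  with xt show ?thesis by blast
qed

lemma reg_eq: "W \<in> Reg U R \<Longrightarrow> W = lower_approx U R (upper_approx U R W)"
  unfolding Reg_def by blast

lemma F4: assumes W: "W \<in> Reg U R" and x: "x \<in> U"
  shows "x \<in> W \<longleftrightarrow> (\<forall>t. term_el U R t \<and> (x,t) \<in> R \<longrightarrow> succ_set R t \<inter> W \<noteq> {})"
proof -
  have "x \<in> W \<longleftrightarrow> (\<forall>y\<in>succ_set R x. succ_set R y \<inter> W \<noteq> {})"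
    using reg_eq[OF W] x succ_sub unfolding lower_approx_def upper_approx_def
    by (smt (verit, best) disjoint_iff mem_Collect_eq subset_iff)
  also have "\<dots> \<longleftrightarrow> (\<forall>t. term_el U R t \<and> (x,t) \<in> R \<longrightarrow> succ_set R t \<inter> W \<noteq> {})"
  proof
    assume "\<forall>y\<in>succ_set R x. succ_set R y \<inter> W \<noteq> {}"
    then show "\<forall>t. term_el U R t \<and> (x,t) \<in> R \<longrightarrow> succ_set R t \<inter> W \<noteq> {}"
      by (simp add: succ_set_def)
  next
    assume H: "\<forall>t. term_el U R t \<and> (x,t) \<in> R \<longrightarrow> succ_set R t \<inter> W \<noteq> {}"
    show "\<forall>y\<in>succ_set R x. succ_set R y \<inter> W \<noteq> {}"
    proof
      fix y assume "y \<in> succ_set R x"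
      then have xy: "(x,y) \<in> R" by (simp add: succ_set_def)
      then have "y \<in> U" using RU by auto
      then obtain t where t: "term_el U R t" "(y,t) \<in> R" using F3 by blast
      have "(x,t) \<in> R" using xy t tr by (meson transD)
      with H t have "succ_set R t \<inter> W \<noteq> {}" by blast
      moreover have "succ_set R t \<subseteq> succ_set R y" using t tr unfolding succ_set_def by (auto dest: transD)
      ultimately show "succ_set R y \<inter> W \<noteq> {}" by blast
    qed
  qed
  finally show ?thesis .
qed

lemma F5: assumes W: "W \<in> Reg U R" and t: "term_el U R t"
  shows "(t \<in> W \<longleftrightarrow> succ_set R t \<inter> W \<noteq> {}) \<and> (t \<in> W \<longleftrightarrow> succ_set R t \<subseteq> W)"
proof -
  have tU: "t \<in> U" using t by (simp add: term_el_def)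
  have A: "\<And>u. (t,u) \<in> R \<Longrightarrow> u \<in> W \<longleftrightarrow> succ_set R t \<inter> W \<noteq> {}"
  proof -
    fix u assume tu: "(t,u) \<in> R"
    have u: "term_el U R u" "succ_set R u = succ_set R t" using F2[OF t tu] by auto
    have uU: "u \<in> U" using u by (simp add: term_el_def)
    have "u \<in> W \<longleftrightarrow> (\<forall>s. term_el U R s \<and> (u,s) \<in> R \<longrightarrow> succ_set R s \<inter> W \<noteq> {})"
      by (rule F4[OF W uU])
    also have "\<dots> \<longleftrightarrow> succ_set R t \<inter> W \<noteq> {}"
    proof
      assume "\<forall>s. term_el U R s \<and> (u,s) \<in> R \<longrightarrow> succ_set R s \<inter> W \<noteq> {}"
      then have "succ_set R u \<inter> W \<noteq> {}" using F1[OF u(1)] u(1) by blast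
      then show "succ_set R t \<inter> W \<noteq> {}" using u by simp
    next
      assume "succ_set R t \<inter> W \<noteq> {}"
      then show "\<forall>s. term_el U R s \<and> (u,s) \<in> R \<longrightarrow> succ_set R s \<inter> W \<noteq> {}"
        using F2[OF u(1)] u(2) by auto
    qed
    finally show "u \<in> W \<longleftrightarrow> succ_set R t \<inter> W \<noteq> {}" .
  qed
  have tt: "(t,t) \<in> R" by (rule F1[OF t])
  show ?thesis using A[OF tt] A tt unfolding succ_set_def by blast
qed

lemma cls_mono: "V \<subseteq> W \<Longrightarrow> cls U R V \<subseteq> cls U R W"
  unfolding cls_def by blast

lemma F6: assumes V: "V \<in> Reg U R" and W: "W \<in> Reg U R" and c: "cls U R V \<subseteq> cls U R W"
  shows "V \<subseteq> W"
proof
  fix x assume xV: "x \<in> V"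
  have xU: "x \<in> U" using V xV unfolding Reg_def by blast
  show "x \<in> W" unfolding F4[OF W xU]
  proof (intro allI impI)
    fix t assume t: "term_el U R t \<and> (x,t) \<in> R"
    have "succ_set R t \<inter> V \<noteq> {}" using F4[OF V xU] xV t by blast
    then have "t \<in> V" using F5[OF V] t by blast
    then have "succ_set R t \<in> cls U R W" using c t unfolding cls_def by blast
    then obtain t' where t': "term_el U R t'" "t' \<in> W" "succ_set R t = succ_set R t'"
      unfolding cls_def by blast
    have "succ_set R t' \<subseteq> W" using F5[OF W t'(1)] t'(2) by blast
    moreover have "t' \<in> succ_set R t'" using F1[OF t'(1)] by (simp add: succ_set_def)
    ultimately show "succ_set R t \<inter> W \<noteq> {}" using t'(3) by blast
  qed
qed


lemma G_term: assumes t: "term_el U R t" and tu: "(t,u) \<in> R"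
  shows "u \<in> GS U R S \<longleftrightarrow> succ_set R t \<in> S"
proof -
  have u: "term_el U R u" "succ_set R u = succ_set R t" using F2[OF t tu] by auto
  have uU: "u \<in> U" using u by (simp add: term_el_def)
  show ?thesis
  proof
    assume "u \<in> GS U R S"
    then show "succ_set R t \<in> S" using F1[OF u(1)] u unfolding GS_def by auto
  next
    assume "succ_set R t \<in> S"
    then show "u \<in> GS U R S" using uU F2[OF u(1)] u(2) unfolding GS_def by auto
  qed
qed

lemma G_sub: "GS U R S \<subseteq> U" unfolding GS_def by blast

lemma G_reg: "GS U R S \<in> Reg U R"
proof -
  have A: "\<And>t. term_el U R t \<Longrightarrow> succ_set R t \<inter> GS U R S \<noteq> {} \<longleftrightarrow> succ_set R t \<in> S"
  proof -
    fix t assume t: "term_el U R t"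
    show "succ_set R t \<inter> GS U R S \<noteq> {} \<longleftrightarrow> succ_set R t \<in> S"
      using G_term[OF t] F1[OF t] unfolding succ_set_def by blast
  qed
  have "lower_approx U R (upper_approx U R (GS U R S)) = GS U R S"
  proof (rule set_eqI)
    fix x
    show "x \<in> lower_approx U R (upper_approx U R (GS U R S)) \<longleftrightarrow> x \<in> GS U R S"
    proof
      assume x: "x \<in> lower_approx U R (upper_approx U R (GS U R S))"
      then have xU: "x \<in> U" and H: "\<And>y. (x,y) \<in> R \<Longrightarrow> succ_set R y \<inter> GS U R S \<noteq> {}"
        unfolding lower_approx_def upper_approx_def succ_set_def by auto
      show "x \<in> GS U R S" unfolding GS_def using xU H A by blast
    next
      assume x: "x \<in> GS U R S"
      then have xU: "x \<in> U" unfolding GS_def by blast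
      have "\<And>y. (x,y) \<in> R \<Longrightarrow> succ_set R y \<inter> GS U R S \<noteq> {}"
      proof -
        fix y assume xy: "(x,y) \<in> R"
        then have "y \<in> U" using RU by auto
        then obtain t where t: "term_el U R t" "(y,t) \<in> R" using F3 by blast
        have "(x,t) \<in> R" using xy t tr by (meson transD)
        then have "succ_set R t \<in> S" using x t unfolding GS_def by blast
        then have "succ_set R t \<inter> GS U R S \<noteq> {}" using A t by blast
        moreover have "succ_set R t \<subseteq> succ_set R y" using t tr unfolding succ_set_def by (auto dest: transD)
        ultimately show "succ_set R y \<inter> GS U R S \<noteq> {}" by blast
      qed
      then show "x \<in> lower_approx U R (upper_approx U R (GS U R S))"
        using xU succ_sub unfolding lower_approx_def upper_approx_def succ_set_def by blast
    qed
  qed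
  then show ?thesis unfolding Reg_def using G_sub by blast
qed

lemma cls_G: assumes S: "S \<subseteq> cls U R U" shows "cls U R (GS U R S) = S"
proof
  show "cls U R (GS U R S) \<subseteq> S"
    unfolding cls_def using G_term F1 by blast
  show "S \<subseteq> cls U R (GS U R S)"
  proof
    fix K assume K: "K \<in> S"
    then obtain t where t: "term_el U R t" "K = succ_set R t" using S unfolding cls_def by blast
    have "t \<in> GS U R S" using G_term[OF t(1) F1[OF t(1)]] K t by blast
    then show "K \<in> cls U R (GS U R S)" using t unfolding cls_def by blast
  qed
qed

lemma reg_sub: "W \<in> Reg U R \<Longrightarrow> W \<subseteq> U" unfolding Reg_def by blast

lemma cls_fin: "finite (cls U R W)"
proof -
  have "cls U R W \<subseteq> Pow U" unfolding cls_def using succ_sub by blast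
  then show ?thesis using fin by (meson finite_Pow_iff finite_subset)
qed

lemma chain_bound: assumes W: "W \<in> Reg U R" and C: "reg_chain_in U R W C"
  shows "finite C \<and> card C \<le> card (cls U R W) + 1"
proof -
  have CR: "C \<subseteq> Reg U R" and CW: "\<And>V. V \<in> C \<Longrightarrow> V \<subseteq> W"
    and ch: "\<And>V1 V2. V1 \<in> C \<Longrightarrow> V2 \<in> C \<Longrightarrow> V1 \<subseteq> V2 \<or> V2 \<subseteq> V1"
    using C unfolding reg_chain_in_def by blast+
  have "C \<subseteq> Pow U" using CR reg_sub by blast
  then have fC: "finite C" using fin by (meson finite_Pow_iff finite_subset)
  define f where "f V = card (cls U R V)" for V
  have inj: "inj_on f C"
  proof (rule inj_onI)
    fix V1 V2 assume V: "V1 \<in> C" "V2 \<in> C" and e: "f V1 = f V2"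
    have gen: "\<And>A B. A \<in> C \<Longrightarrow> B \<in> C \<Longrightarrow> A \<subseteq> B \<Longrightarrow> f A = f B \<Longrightarrow> A = B"
    proof -
      fix A B assume AB: "A \<in> C" "B \<in> C" "A \<subseteq> B" "f A = f B"
      have "cls U R A = cls U R B"
        using card_seteq[OF cls_fin cls_mono[OF AB(3)]] AB(4) unfolding f_def by simp
      then have "B \<subseteq> A" using F6 AB CR by blast
      with AB show "A = B" by blast
    qed
    show "V1 = V2" using ch[OF V] gen V e by metis
  qed
  have "f ` C \<subseteq> {0..card (cls U R W)}"
    using CW cls_mono card_mono[OF cls_fin] unfolding f_def by fastforce
  then have "card (f ` C) \<le> card {0..card (cls U R W)}"
    by (intro card_mono) auto
  then have "card (f ` C) \<le> card (cls U R W) + 1" by simp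
  with card_image[OF inj] fC show ?thesis by simp
qed

lemma chain_exists: assumes W: "W \<in> Reg U R"
  shows "\<exists>C. reg_chain_in U R W C \<and> card C = card (cls U R W) + 1"
proof -
  obtain L where L: "set L = cls U R W" "distinct L" using finite_distinct_list[OF cls_fin] by blast
  define g where "g i = GS U R (set (take i L))" for i
  have clsg: "\<And>i. cls U R (g i) = set (take i L)"
    unfolding g_def using L cls_mono[of W U] reg_sub[OF W] set_take_subset
    by (metis cls_G subset_trans)
  have gmono: "\<And>i j. i \<le> j \<Longrightarrow> g i \<subseteq> g j"
    using F6 G_reg clsg set_take_subset_set_take unfolding g_def by metis
  have inj: "inj_on g {0..length L}"
  proof (rule inj_onI)
    fix i j assume ij: "i \<in> {0..length L}" "j \<in> {0..length L}" "g i = g j"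
    then have "set (take i L) = set (take j L)" using clsg by metis
    then have "card (set (take i L)) = card (set (take j L))" by simp
    then show "i = j" using ij L(2) by (simp add: distinct_card)
  qed
  define C where "C = g ` {0..length L}"
  have "reg_chain_in U R W C"
    unfolding reg_chain_in_def C_def
  proof (intro conjI ballI)
    show "g ` {0..length L} \<subseteq> Reg U R" unfolding g_def using G_reg by blast
  next
    fix B assume "B \<in> g ` {0..length L}"
    then obtain i where "B = g i" by blast
    then show "B \<subseteq> W" using F6[OF _ W] G_reg clsg L(1) set_take_subset unfolding g_def by metis
  next
    fix B1 B2 assume "B1 \<in> g ` {0..length L}" "B2 \<in> g ` {0..length L}"
    then obtain i j where "B1 = g i" "B2 = g j" by blast
    then show "B1 \<subseteq> B2 \<or> B2 \<subseteq> B1" using gmono nat_le_linear by metis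
  qed
  moreover have "card C = card (cls U R W) + 1"
    proof -
    have "card (set L) = length L" using L(2) by (rule distinct_card)
    then show ?thesis unfolding C_def using card_image[OF inj] L(1) by simp
  qed
  ultimately show ?thesis by blast
qed

lemma height_eq: assumes W: "W \<in> Reg U R" shows "height U R W = card (cls U R W)"
proof -
  let ?k = "card (cls U R W)"
  let ?M = "{card C - 1 | C. reg_maximal_chain U R W C}"
  have le: "\<And>y. y \<in> ?M \<Longrightarrow> y \<le> ?k"
    using chain_bound[OF W] unfolding reg_maximal_chain_def by fastforce
  have finM: "finite ?M" using le by (meson finite_nat_set_iff_bounded_le)
  obtain C0 where C0: "reg_chain_in U R W C0" "card C0 = ?k + 1" using chain_exists[OF W] by blast
  have "reg_maximal_chain U R W C0"
    unfolding reg_maximal_chain_def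
  proof (intro conjI allI impI)
    show "reg_chain_in U R W C0" by (rule C0(1))
    fix D assume D: "reg_chain_in U R W D \<and> C0 \<subseteq> D"
    then have "finite D \<and> card D \<le> ?k + 1" using chain_bound[OF W] by blast
    then show "D = C0" using card_seteq D C0(2) by metis
  qed
  then have "?k \<in> ?M" using C0(2) by force
  then show ?thesis unfolding height_def using Max_eqI[OF finM le] by blast
qed


lemma main:
  assumes X: "X \<in> Reg U R" and Y: "Y \<in> Reg U R"
    and hX: "height U R X = n" and hY: "height U R Y = n - 1" and n1: "1 \<le> n"
    and Z: "Z \<subseteq> U" and YZ: "Y \<subset> Z" and ZX: "Z \<subset> X"
  shows "reg_rank U R Z = n"
proof -
  have upper: "\<And>I. I \<subseteq> Z \<Longrightarrow> reg_indep U R I \<Longrightarrow> card I \<le> n"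
  proof -
    fix I assume I: "I \<subseteq> Z" "reg_indep U R I"
    then have "card (I \<inter> X) \<le> height U R X" using X unfolding reg_indep_def by blast
    moreover have "I \<inter> X = I" using I ZX by blast
    ultimately show "card I \<le> n" using hX by simp
  qed
  obtain z where z: "z \<in> Z" "z \<notin> Y" using YZ by blast
  have zU: "z \<in> U" using z Z by blast
  obtain t0 where t0: "term_el U R t0" "(z,t0) \<in> R" "succ_set R t0 \<inter> Y = {}"
    using F4[OF Y zU] z by blast
  define K0 where "K0 = succ_set R t0"
  have K0Y: "K0 \<notin> cls U R Y"
  proof
    assume "K0 \<in> cls U R Y"
    then obtain t where t: "term_el U R t" "t \<in> Y" "K0 = succ_set R t" unfolding cls_def by blast
    have "succ_set R t \<subseteq> Y" using F5[OF Y t(1)] t(2) by blast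
    moreover have "t \<in> succ_set R t" using F1[OF t(1)] by (simp add: succ_set_def)
    ultimately show False using t(3) t0(3) K0_def by blast
  qed
  have K0W: "\<And>W. W \<in> Reg U R \<Longrightarrow> z \<in> W \<Longrightarrow> K0 \<in> cls U R W"
  proof -
    fix W assume W: "W \<in> Reg U R" "z \<in> W"
    then have "succ_set R t0 \<inter> W \<noteq> {}" using F4[OF W(1) zU] t0 by blast
    then have "t0 \<in> W" using F5[OF W(1) t0(1)] by blast
    then show "K0 \<in> cls U R W" using t0 K0_def unfolding cls_def by blast
  qed
  define rep where "rep K = (SOME u. u \<in> K)" for K :: "'a set"
  have rep: "\<And>K W. K \<in> cls U R W \<Longrightarrow> rep K \<in> K \<and> term_el U R (rep K) \<and> succ_set R (rep K) = K"
  proof -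
    fix K W assume "K \<in> cls U R W"
    then obtain t where t: "term_el U R t" "K = succ_set R t" unfolding cls_def by blast
    have "t \<in> K" using F1[OF t(1)] t(2) by (simp add: succ_set_def)
    then have rK: "rep K \<in> K" unfolding rep_def by (metis someI)
    then have "(t, rep K) \<in> R" using t(2) by (simp add: succ_set_def)
    then show "rep K \<in> K \<and> term_el U R (rep K) \<and> succ_set R (rep K) = K"
      using F2[OF t(1)] rK t(2) by blast
  qed
  have injr: "inj_on rep (cls U R Y)"
    by (rule inj_onI) (metis rep)
  have repY: "rep ` cls U R Y \<subseteq> Y"
  proof
    fix u assume "u \<in> rep ` cls U R Y"
    then obtain K where K: "K \<in> cls U R Y" "u = rep K" by blast
    then obtain t where t: "term_el U R t" "t \<in> Y" "K = succ_set R t" unfolding cls_def by blast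
    have "K \<subseteq> Y" using F5[OF Y t(1)] t by blast
    then show "u \<in> Y" using rep[OF K(1)] K(2) by blast
  qed
  define I where "I = insert z (rep ` cls U R Y)"
  have zI: "z \<notin> rep ` cls U R Y" using repY z by blast
  have cardI: "card I = n"
  proof -
    have "card I = card (rep ` cls U R Y) + 1"
      unfolding I_def using zI cls_fin by (simp add: card_insert_if)
    also have "\<dots> = card (cls U R Y) + 1" using card_image[OF injr] by simp
    also have "\<dots> = n" using height_eq[OF Y] hY n1 by simp
    finally show ?thesis .
  qed
  have IZ: "I \<subseteq> Z" unfolding I_def using repY YZ z by blast
  have indep: "reg_indep U R I"
    unfolding reg_indep_def
  proof (intro conjI ballI)
    show "I \<subseteq> U" using IZ Z by blast
    fix W assume W: "W \<in> Reg U R"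
    define A where "A = cls U R Y \<inter> cls U R W"
    have sub: "I \<inter> W \<subseteq> rep ` A \<union> (if z \<in> W then {z} else {})"
    proof
      fix u assume u: "u \<in> I \<inter> W"
      show "u \<in> rep ` A \<union> (if z \<in> W then {z} else {})"
      proof (cases "u = z")
        case True then show ?thesis using u by auto
      next
        case False
        then obtain K where K: "K \<in> cls U R Y" "u = rep K" using u unfolding I_def by blast
        have "K \<in> cls U R W" using rep[OF K(1)] K(2) u unfolding cls_def by blast
        then show ?thesis using K unfolding A_def by blast
      qed
    qed
    have fA: "finite A" unfolding A_def using cls_fin by blast
    have "card (I \<inter> W) \<le> card (rep ` A \<union> (if z \<in> W then {z} else {}))"
      by (rule card_mono[OF _ sub]) (use fA in auto)
    also have "\<dots> \<le> card (rep ` A) + card (if z \<in> W then {z} else {})"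
      by (rule card_Un_le)
    also have "\<dots> \<le> card A + (if z \<in> W then 1 else 0)"
      using card_image_le[OF fA, of rep] by auto
    also have "\<dots> \<le> card (cls U R W)"
    proof (cases "z \<in> W")
      case True
      have "insert K0 A \<subseteq> cls U R W" using K0W[OF W True] unfolding A_def by blast
      then have "card (insert K0 A) \<le> card (cls U R W)" using card_mono cls_fin by blast
      moreover have "K0 \<notin> A" using K0Y unfolding A_def by blast
      ultimately show ?thesis using True fA by simp
    next
      case False
      have "card A \<le> card (cls U R W)" using card_mono[OF cls_fin] unfolding A_def by blast
      then show ?thesis using False by simp
    qed
    also have "\<dots> = height U R W" using height_eq[OF W] by simp
    finally show "card (I \<inter> W) \<le> height U R W" .
  qed
  let ?M = "{card I | I. I \<subseteq> Z \<and> reg_indep U R I}"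
  have le: "\<And>y. y \<in> ?M \<Longrightarrow> y \<le> n" using upper by blast
  have finM: "finite ?M" using le by (meson finite_nat_set_iff_bounded_le)
  have "n \<in> ?M" using IZ indep cardI by blast
  then show ?thesis unfolding reg_rank_def using Max_eqI[OF finM le] by blast
qed

end

theorem proposition8:
  fixes U :: "'a set" and R :: "('a \<times> 'a) set" and n :: nat and X Y Z :: "'a set"
  assumes "finite U" and "U \<noteq> {}"
    and "R \<subseteq> U \<times> U" and "serial_on U R" and "trans R"
    and "1 \<le> n" and "n \<le> height U R U"
    and "X \<in> Reg U R" and "Y \<in> Reg U R"
    and "height U R X = n" and "height U R Y = n - 1"
    and "Z \<subseteq> U" and "Y \<subset> Z" and "Z \<subset> X"
  shows "reg_rank U R Z = height U R X"
  using main[OF assms(1,3,4,5,8,9,10,11,6,12,13,14)] assms(10) by simp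

end
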